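(* Let $n\ge 1$ and let $B^{[n]}$ be the $n$-th Kronecker power of $$B=\begin{bmatrix}1 & \sqrt{2}-1\\ 1 & -\sqrt{2}-1\end{bmatrix},$$ with its $2^n$ rows labeled by the vectors of $F^n$ ($F=\{0,1\}$ the binary field) in lexicographic order. Let $K^{[n]}$ be the $n$-th Kronecker power of $K=\frac{1}{\sqrt2}\begin{bmatrix}1&1\\1&-1\end{bmatrix}$. Then the rows of $B^{[n]}$ whose labels have even Hamming weight form a basis of the eigenspace of the eigenvalue $1$ of $K^{[n]}$, i.e. of $\{x\in\mathbb{R}^{2^n} : xK^{[n]}=x\}$ (row vectors).
   Context: For a matrix $M$, the Kronecker powers are $M^{[1]}=M$ and $M^{[m]}=M^{[m-1]}\otimes M$. Lexicographic labeling: the row with index $j$ ($0\le j<2^n$) is labeled by the binary expansion of $j$ written as a vector of length $n$ (most significant bit first). *)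

theory Defs
  imports Complex_Main
begin

text \<open>Matrices are functions nat => nat => real, used only on an explicit index range.
  Row vectors of length N are functions nat => real that vanish outside {..<N}.\<close>

text \<open>Row index i of A (x) M (M 2x2) corresponds to block row i div 2 and inner row i mod 2.\<close>
fun kron_pow :: "(nat \<Rightarrow> nat \<Rightarrow> real) \<Rightarrow> nat \<Rightarrow> nat \<Rightarrow> nat \<Rightarrow> real" where
  "kron_pow M 0 = (\<lambda>i j. 1)"
| "kron_pow M (Suc m) = (\<lambda>i j. kron_pow M m (i div 2) (j div 2) * M (i mod 2) (j mod 2))"

definition Bmat :: "nat \<Rightarrow> nat \<Rightarrow> real" where
  "Bmat i j = (if j = 0 then 1 else if i = 0 then sqrt 2 - 1 else - sqrt 2 - 1)"

definition Kmat :: "nat \<Rightarrow> nat \<Rightarrow> real" where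
  "Kmat i j = (1 / sqrt 2) * (if i = 1 \<and> j = 1 then -1 else 1)"

definition hamming_weight :: "nat \<Rightarrow> nat \<Rightarrow> nat" where
  "hamming_weight n i = (\<Sum>k<n. (i div 2 ^ k) mod 2)"

definition row_of :: "(nat \<Rightarrow> nat \<Rightarrow> real) \<Rightarrow> nat \<Rightarrow> nat \<Rightarrow> nat \<Rightarrow> real" where
  "row_of A N i = (\<lambda>k. if k < N then A i k else 0)"

definition eigenspace1 :: "(nat \<Rightarrow> nat \<Rightarrow> real) \<Rightarrow> nat \<Rightarrow> (nat \<Rightarrow> real) set" where
  "eigenspace1 A N = {x. (\<forall>k\<ge>N. x k = 0) \<and> (\<forall>j<N. (\<Sum>i<N. x i * A i j) = x j)}"

definition is_basis_of :: "nat \<Rightarrow> nat set \<Rightarrow> (nat \<Rightarrow> nat \<Rightarrow> real) \<Rightarrow> (nat \<Rightarrow> real) set \<Rightarrow> bool" where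
  "is_basis_of N I v S \<longleftrightarrow>
     (\<forall>i\<in>I. v i \<in> S) \<and>
     (\<forall>c. (\<forall>k<N. (\<Sum>i\<in>I. c i * v i k) = 0) \<longrightarrow> (\<forall>i\<in>I. c i = 0)) \<and>
     (\<forall>x\<in>S. \<exists>c. \<forall>k<N. x k = (\<Sum>i\<in>I. c i * v i k))"

end

theory Submission imports Defs begin

lemma sum_split2: fixes f :: "nat \<Rightarrow> 'a::comm_monoid_add" and M :: nat
  shows "(\<Sum>k<2*M. f k) = (\<Sum>q<M. f (2*q) + f (2*q+1))"
  by (induction M) (simp_all add: algebra_simps)

lemma sum_split_pow: fixes f :: "nat \<Rightarrow> 'a::comm_monoid_add" shows "(\<Sum>k<2^Suc m. f k) = (\<Sum>q<2^m. f (2*q) + f (2*q+1))"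
  using sum_split2[of f "2^m"] by simp

lemma dm2[simp]: "Suc (q * 2) mod 2 = 1" "Suc (q * 2) div 2 = q" "Suc (2*q) mod 2 = 1" "Suc (2*q) div 2 = q" 
  by presburger+

lemma hw_Suc: "hamming_weight (Suc m) i = i mod 2 + hamming_weight m (i div 2)"
  unfolding hamming_weight_def sum.lessThan_Suc_shift
  by (simp add: div_mult2_eq)

lemma base_eig: "a < 2 \<Longrightarrow> b < 2 \<Longrightarrow> Bmat a 0 * Kmat 0 b + Bmat a 1 * Kmat 1 b = (-1)^a * Bmat a b"
proof -
  assume "a < 2" "b < 2"
  hence "a = 0 \<or> a = 1" "b = 0 \<or> b = 1" by auto
  moreover have "sqrt 2 * sqrt 2 = (2::real)" by simp
  ultimately show ?thesis
    unfolding Bmat_def Kmat_def by (auto simp: field_simps)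
qed

lemma eig: "(\<Sum>k<2^m. kron_pow Bmat m i k * kron_pow Kmat m k j) = (-1)^(hamming_weight m i) * kron_pow Bmat m i j"
proof (induction m arbitrary: i j)
  case 0
  then show ?case by (simp add: hamming_weight_def)
next
  case (Suc m)
  have "(\<Sum>k<2^Suc m. kron_pow Bmat (Suc m) i k * kron_pow Kmat (Suc m) k j)
     = (\<Sum>q<2^m. kron_pow Bmat m (i div 2) q * kron_pow Kmat m q (j div 2) *
          (Bmat (i mod 2) 0 * Kmat 0 (j mod 2) + Bmat (i mod 2) 1 * Kmat 1 (j mod 2)))"
    unfolding sum_split_pow by (simp add: algebra_simps)
  also have "\<dots> = (-1)^(hamming_weight m (i div 2)) * kron_pow Bmat m (i div 2) (j div 2) * ((-1)^(i mod 2) * Bmat (i mod 2) (j mod 2))"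
    using base_eig[of "i mod 2" "j mod 2"] by (simp add: sum_distrib_right[symmetric] Suc.IH)
  also have "\<dots> = (-1)^(hamming_weight (Suc m) i) * kron_pow Bmat (Suc m) i j"
    by (simp add: hw_Suc power_add)
  finally show ?case .
qed

lemma Ksym: "kron_pow Kmat m i j = kron_pow Kmat m j i"
  by (induction m arbitrary: i j) (auto simp: Kmat_def)


lemma eq_dm: "(i::nat) = l \<longleftrightarrow> i div 2 = l div 2 \<and> i mod 2 = l mod 2"
  by (metis div_mult_mod_eq)

definition dB :: "nat \<Rightarrow> real" where
  "dB a = (if a = 0 then 4 - 2 * sqrt 2 else 4 + 2 * sqrt 2)"

fun Dn :: "nat \<Rightarrow> nat \<Rightarrow> real" where
  "Dn 0 i = 1"
| "Dn (Suc m) i = Dn m (i div 2) * dB (i mod 2)"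

lemma dB_pos: "dB a > 0"
proof -
  have "sqrt 2 < 2" by (rule real_less_lsqrt) auto
  moreover have "sqrt 2 \<ge> 0" by simp
  ultimately have "4 - 2 * sqrt 2 > 0" "4 + 2 * sqrt 2 > 0" by linarith+
  thus ?thesis unfolding dB_def by simp
qed

lemma Dn_pos: "Dn m i > 0"
  by (induction m arbitrary: i) (simp_all add: dB_pos)

lemma base_orth: "a < 2 \<Longrightarrow> b < 2 \<Longrightarrow> Bmat a 0 * Bmat b 0 + Bmat a 1 * Bmat b 1 = (if a = b then dB a else 0)"
proof -
  assume "a < 2" "b < 2"
  hence "a = 0 \<or> a = 1" "b = 0 \<or> b = 1" by auto
  moreover have "sqrt 2 * sqrt 2 = (2::real)" by simp
  ultimately show ?thesis
    unfolding Bmat_def dB_def by (auto simp: algebra_simps)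
qed

lemma base_comp: "k < 2 \<Longrightarrow> l < 2 \<Longrightarrow> Bmat 0 k * Bmat 0 l / dB 0 + Bmat 1 k * Bmat 1 l / dB 1 = (if k = l then 1 else 0)"
proof -
  assume "k < 2" "l < 2"
  hence "k = 0 \<or> k = 1" "l = 0 \<or> l = 1" by auto
  moreover have s2: "sqrt 2 * sqrt 2 = (2::real)" by simp
  moreover have "dB 0 > 0" "dB 1 > 0" by (rule dB_pos)+
  ultimately show ?thesis
    unfolding Bmat_def dB_def by (auto simp: field_simps s2)
qed

lemma orth: "i < 2^m \<Longrightarrow> l < 2^m \<Longrightarrow>
  (\<Sum>k<2^m. kron_pow Bmat m i k * kron_pow Bmat m l k) = (if i = l then Dn m i else 0)"
proof (induction m arbitrary: i l)
  case 0
  then show ?case by simp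
next
  case (Suc m)
  have lt: "i div 2 < 2^m" "l div 2 < 2^m" using Suc.prems by auto
  have "(\<Sum>k<2^Suc m. kron_pow Bmat (Suc m) i k * kron_pow Bmat (Suc m) l k)
     = (\<Sum>q<2^m. kron_pow Bmat m (i div 2) q * kron_pow Bmat m (l div 2) q *
          (Bmat (i mod 2) 0 * Bmat (l mod 2) 0 + Bmat (i mod 2) 1 * Bmat (l mod 2) 1))"
    unfolding sum_split_pow by (simp add: algebra_simps)
  also have "\<dots> = (if i div 2 = l div 2 then Dn m (i div 2) else 0) * (if i mod 2 = l mod 2 then dB (i mod 2) else 0)"
    using base_orth[of "i mod 2" "l mod 2"] by (simp add: sum_distrib_right[symmetric] Suc.IH[OF lt])
  also have "\<dots> = (if i = l then Dn (Suc m) i else 0)"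
    using eq_dm[of i l] by auto
  finally show ?case .
qed

lemma comp: "k < 2^m \<Longrightarrow> l < 2^m \<Longrightarrow>
  (\<Sum>i<2^m. kron_pow Bmat m i k * kron_pow Bmat m i l / Dn m i) = (if k = l then 1 else 0)"
proof (induction m arbitrary: k l)
  case 0
  then show ?case by simp
next
  case (Suc m)
  have lt: "k div 2 < 2^m" "l div 2 < 2^m" using Suc.prems by auto
  have "(\<Sum>i<2^Suc m. kron_pow Bmat (Suc m) i k * kron_pow Bmat (Suc m) i l / Dn (Suc m) i)
     = (\<Sum>q<2^m. kron_pow Bmat m q (k div 2) * kron_pow Bmat m q (l div 2) / Dn m q *
          (Bmat 0 (k mod 2) * Bmat 0 (l mod 2) / dB 0 + Bmat 1 (k mod 2) * Bmat 1 (l mod 2) / dB 1))"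
    unfolding sum_split_pow by (simp add: algebra_simps)
  also have "\<dots> = (if k div 2 = l div 2 then 1 else 0) * (if k mod 2 = l mod 2 then 1 else 0)"
    using base_comp[of "k mod 2" "l mod 2"] by (simp add: sum_distrib_right[symmetric] Suc.IH[OF lt])
  also have "\<dots> = (if k = l then 1 else 0)"
    using eq_dm[of k l] by auto
  finally show ?case .
qed

theorem lemma1:
  fixes n :: nat
  assumes "n \<ge> 1"
  shows "is_basis_of (2 ^ n) {i. i < 2 ^ n \<and> even (hamming_weight n i)}
           (row_of (kron_pow Bmat n) (2 ^ n)) (eigenspace1 (kron_pow Kmat n) (2 ^ n))"
proof -
  define B where "B = kron_pow Bmat n"
  define K where "K = kron_pow Kmat n"
  define N :: nat where "N = 2 ^ n"
  define I where "I = {i. i < N \<and> even (hamming_weight n i)}"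
  have eigB: "(\<Sum>k<N. B i k * K k j) = (-1)^(hamming_weight n i) * B i j" for i j
    unfolding B_def K_def N_def by (rule eig)
  have orthB: "i < N \<Longrightarrow> l < N \<Longrightarrow> (\<Sum>k<N. B i k * B l k) = (if i = l then Dn n i else 0)" for i l
    unfolding B_def N_def by (rule orth)
  have compB: "k < N \<Longrightarrow> l < N \<Longrightarrow> (\<Sum>i<N. B i k * B i l / Dn n i) = (if k = l then 1 else 0)" for k l
    unfolding B_def N_def by (rule comp)
  have KsymB: "K i j = K j i" for i j unfolding K_def by (rule Ksym)
  have finI: "finite I" and IN: "I \<subseteq> {..<N}" unfolding I_def by auto
  have rowv: "k < N \<Longrightarrow> row_of B N i k = B i k" for i k unfolding row_of_def by simp
  have P1: "\<forall>i\<in>I. row_of B N i \<in> eigenspace1 K N"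
  proof
    fix a assume "a \<in> I"
    hence ev: "even (hamming_weight n a)" unfolding I_def by auto
    have "(\<Sum>i<N. row_of B N a i * K i j) = row_of B N a j" if "j < N" for j
    proof -
      have "(\<Sum>i<N. row_of B N a i * K i j) = (\<Sum>i<N. B a i * K i j)"
        by (rule sum.cong) (auto simp: rowv)
      also have "\<dots> = B a j" using eigB[of a j] ev by simp
      finally show ?thesis using that by (simp add: rowv)
    qed
    thus "row_of B N a \<in> eigenspace1 K N"
      unfolding eigenspace1_def by (auto simp: row_of_def)
  qed
  have P2: "\<forall>c. (\<forall>k<N. (\<Sum>i\<in>I. c i * row_of B N i k) = 0) \<longrightarrow> (\<forall>i\<in>I. c i = 0)"
  proof (intro allI impI ballI)
    fix c j assume H: "\<forall>k<N. (\<Sum>i\<in>I. c i * row_of B N i k) = 0" and j: "j \<in> I"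
    have jN: "j < N" using j IN by auto
    have "0 = (\<Sum>k<N. (\<Sum>i\<in>I. c i * row_of B N i k) * B j k)"
      using H by simp
    also have "\<dots> = (\<Sum>k<N. \<Sum>i\<in>I. c i * (B i k * B j k))"
      by (rule sum.cong) (simp_all add: rowv sum_distrib_right mult.assoc)
    also have "\<dots> = (\<Sum>i\<in>I. \<Sum>k<N. c i * (B i k * B j k))"
      by (rule sum.swap)
    also have "\<dots> = (\<Sum>i\<in>I. c i * (\<Sum>k<N. B i k * B j k))"
      by (simp add: sum_distrib_left)
    also have "\<dots> = (\<Sum>i\<in>I. c i * (if i = j then Dn n i else 0))"
      by (rule sum.cong) (use IN jN in \<open>auto simp: orthB\<close>)
    also have "\<dots> = c j * Dn n j"
      using j finI by (simp add: if_distrib sum.delta cong: if_cong)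
    finally have "c j * Dn n j = 0" by simp
    thus "c j = 0" using Dn_pos[of n j] by simp
  qed
  have P3: "\<forall>x\<in>eigenspace1 K N. \<exists>c. \<forall>k<N. x k = (\<Sum>i\<in>I. c i * row_of B N i k)"
  proof
    fix x assume "x \<in> eigenspace1 K N"
    hence xe: "\<And>j. j < N \<Longrightarrow> (\<Sum>i<N. x i * K i j) = x j" unfolding eigenspace1_def by auto
    define s where "s i = (\<Sum>l<N. x l * B i l)" for i
    define c where "c i = s i / Dn n i" for i
    have odd0: "s i = 0" if "odd (hamming_weight n i)" for i
    proof -
      have "s i = (\<Sum>l<N. (\<Sum>j<N. x j * K j l) * B i l)"
        unfolding s_def by (rule sum.cong) (auto simp: xe)
      also have "\<dots> = (\<Sum>l<N. \<Sum>j<N. x j * (B i l * K l j))"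
        by (rule sum.cong[OF refl], subst sum_distrib_right, rule sum.cong[OF refl], simp add: KsymB)
      also have "\<dots> = (\<Sum>j<N. \<Sum>l<N. x j * (B i l * K l j))"
        by (rule sum.swap)
      also have "\<dots> = (\<Sum>j<N. x j * (\<Sum>l<N. B i l * K l j))"
        by (simp add: sum_distrib_left)
      also have "\<dots> = (\<Sum>j<N. x j * (- B i j))"
        using that by (simp add: eigB)
      also have "\<dots> = - s i" unfolding s_def by (simp add: sum_negf)
      finally show ?thesis by simp
    qed
    have "x k = (\<Sum>i\<in>I. c i * row_of B N i k)" if kN: "k < N" for k
    proof -
      have "(\<Sum>i\<in>I. c i * row_of B N i k) = (\<Sum>i\<in>I. c i * B i k)"
        using kN by (simp add: rowv)
      also have "\<dots> = (\<Sum>i<N. c i * B i k)"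
        by (rule sum.mono_neutral_left) (use IN in \<open>auto simp: I_def c_def odd0\<close>)
      also have "\<dots> = (\<Sum>i<N. \<Sum>l<N. x l * (B i l * B i k / Dn n i))"
        unfolding c_def s_def by (rule sum.cong[OF refl]) (simp add: sum_distrib_right mult.assoc sum_divide_distrib)
      also have "\<dots> = (\<Sum>l<N. \<Sum>i<N. x l * (B i l * B i k / Dn n i))"
        by (rule sum.swap)
      also have "\<dots> = (\<Sum>l<N. x l * (\<Sum>i<N. B i l * B i k / Dn n i))"
        by (simp add: sum_distrib_left)
      also have "\<dots> = (\<Sum>l<N. x l * (if l = k then 1 else 0))"
        by (rule sum.cong) (use kN in \<open>auto simp: compB\<close>)
      also have "\<dots> = x k" using kN by (simp add: if_distrib sum.delta cong: if_cong)
      finally show ?thesis by simp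
    qed
    thus "\<exists>c. \<forall>k<N. x k = (\<Sum>i\<in>I. c i * row_of B N i k)" by blast
  qed
  show ?thesis
    unfolding is_basis_of_def B_def[symmetric] K_def[symmetric] N_def[symmetric] I_def[symmetric]
    using P1 P2 P3 by blast
qed

end
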